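(* Let $0<q<\infty$. Then $\frac{\pi_{2q/(2+q),q/2}}{2^{2/q+1}}=\frac{\pi_{2q/(2+q),q}}{2}$, and for all $x\in\left[0,\frac{\pi_{2q/(2+q),q}}{2}\right)$, $$\sin_{2q/(2+q),q/2}(2^{2/q}x)=\frac{2^{2/q}\sin_{2q/(2+q),q}x}{(1+\sin_{2q/(2+q),q}^{q/2}x)^{2/q}},\qquad \cos_{2q/(2+q),q/2}(2^{2/q}x)=\left(\frac{1-\sin_{2q/(2+q),q}^{q/2}x}{1+\sin_{2q/(2+q),q}^{q/2}x}\right)^{1/q+1/2}.$$ Moreover, for the same $x$, $$\sinh_{2q/(2+q),q/2}(2^{2/q}x)=2^{2/q}\sinh_{2,q}x\,(\cosh_{2,q}x+\sinh_{2,q}^{q/2}x)^{2/q},\qquad \cosh_{2q/(2+q),q/2}(2^{2/q}x)=(\cosh_{2,q}x+\sinh_{2,q}^{q/2}x)^{2/q+1}.$$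
   Context: For $0<q<\infty$ and $\frac{q}{q+1}<p<\infty$: let $F_{p,q}(y)=\int_0^y (1-t^q)^{-1/p}\,dt$ for $y\in[0,1)$ and $\pi_{p,q}=2\int_0^1(1-t^q)^{-1/p}\,dt\in(0,\infty]$ (it equals $\infty$ when $p\le 1$). The function $\sin_{p,q}:[0,\pi_{p,q}/2)\to[0,1)$ is the inverse of $F_{p,q}$ and $\cos_{p,q}x=\frac{d}{dx}\sin_{p,q}x$. Let $G_{p,q}(y)=\int_0^y(1+t^q)^{-1/p}\,dt$ for $y\in[0,\infty)$; its range is $[0,\pi_{r,q}/2)$ with $r=\frac{pq}{pq+p-q}$. The function $\sinh_{p,q}:[0,\pi_{r,q}/2)\to[0,\infty)$ is the inverse of $G_{p,q}$ and $\cosh_{p,q}x=\frac{d}{dx}\sinh_{p,q}x$. (The parameter pairs $(2q/(2+q),q/2)$, $(2q/(2+q),q)$ and $(2,q)$ all satisfy $\frac{q'}{q'+1}<p'<\infty$ for the respective second parameter $q'$.) *)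

theory Defs
  imports "HOL-Analysis.Analysis"
begin

definition F_pq :: "real \<Rightarrow> real \<Rightarrow> real \<Rightarrow> real" where
  "F_pq p q y = integral {0..y} (\<lambda>t. (1 - t powr q) powr (-1/p))"

definition pi_pq :: "real \<Rightarrow> real \<Rightarrow> ennreal" where
  "pi_pq p q = 2 * (\<integral>\<^sup>+ t. indicator {0..<1} t * ennreal ((1 - t powr q) powr (-1/p)) \<partial>lborel)"

definition sin_pq :: "real \<Rightarrow> real \<Rightarrow> real \<Rightarrow> real" where
  "sin_pq p q x = (THE y. 0 \<le> y \<and> y < 1 \<and> F_pq p q y = x)"

definition cos_pq :: "real \<Rightarrow> real \<Rightarrow> real \<Rightarrow> real" where
  "cos_pq p q x = (THE D. (sin_pq p q has_real_derivative D) (at x within {0..}))"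

definition G_pq :: "real \<Rightarrow> real \<Rightarrow> real \<Rightarrow> real" where
  "G_pq p q y = integral {0..y} (\<lambda>t. (1 + t powr q) powr (-1/p))"

definition sinh_pq :: "real \<Rightarrow> real \<Rightarrow> real \<Rightarrow> real" where
  "sinh_pq p q x = (THE y. 0 \<le> y \<and> G_pq p q y = x)"

definition cosh_pq :: "real \<Rightarrow> real \<Rightarrow> real \<Rightarrow> real" where
  "cosh_pq p q x = (THE D. (sinh_pq p q has_real_derivative D) (at x within {0..}))"

end

theory Submission
  imports Defs
begin


lemma at_within_Ici_local:
  fixes x c a :: real
  assumes "x < c" shows "at x within {a..c} = at x within {a..}"
  by (rule at_within_nhd[of x "{..<c}"]) (use assms in auto)

lemma at_within_Ici_pos:
  fixes x :: real
  assumes "0 < x" shows "at x within {0..} = at x"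
proof -
  have "at x within {0..} = at x within UNIV"
    by (rule at_within_nhd[of x "{0<..}"]) (use assms in auto)
  then show ?thesis by simp
qed

lemma deriv_Ici_unique:
  fixes f :: "real \<Rightarrow> real"
  assumes "0 \<le> x" "(f has_real_derivative D) (at x within {0..})"
    "(f has_real_derivative E) (at x within {0..})"
  shows "D = E"
proof -
  have "x islimpt {0..x+1}" using assms(1) by simp
  then have "x islimpt {0..}" by (rule islimpt_subset) auto
  then have "at x within {0..} \<noteq> bot" using trivial_limit_within by blast
  then show ?thesis using vector_derivative_unique_within assms(2,3)
    by (metis has_real_derivative_iff_has_vector_derivative)
qed

lemma inv_deriv:
  fixes f g :: "real \<Rightarrow> real"
  assumes fd: "(f has_real_derivative D) (at (g x) within T)" and D: "D \<noteq> 0"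
    and gc: "continuous (at x within S) g" and gS: "\<And>z. z \<in> S \<Longrightarrow> g z \<in> T"
    and inv: "\<And>z. z \<in> S \<Longrightarrow> f (g z) = z" and x: "x \<in> S"
  shows "(g has_real_derivative inverse D) (at x within S)"
proof -
  have lim: "((\<lambda>w. (f w - f (g x)) / (w - g x)) \<longlongrightarrow> D) (at (g x) within T)"
    using fd has_field_derivative_iff by blast
  have fl: "filterlim g (at (g x) within T) (at x within S)"
    unfolding filterlim_at
  proof
    show "\<forall>\<^sub>F z in at x within S. g z \<in> T \<and> g z \<noteq> g x"
      unfolding eventually_at_filter
      by (rule always_eventually) (metis gS inv x)
    show "(g \<longlongrightarrow> g x) (at x within S)" using gc continuous_within by blast
  qed
  have "((\<lambda>z. (f (g z) - f (g x)) / (g z - g x)) \<longlongrightarrow> D) (at x within S)"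
    using filterlim_compose[OF lim fl] by (simp add: o_def)
  moreover have *: "\<forall>\<^sub>F z in at x within S. (f (g z) - f (g x)) / (g z - g x) = (z - x) / (g z - g x)"
    unfolding eventually_at_filter by (rule always_eventually) (simp add: inv x)
  ultimately have "((\<lambda>z. (z - x) / (g z - g x)) \<longlongrightarrow> D) (at x within S)"
    by (rule Lim_transform_eventually)
  then have "((\<lambda>z. inverse ((z - x) / (g z - g x))) \<longlongrightarrow> inverse D) (at x within S)"
    using D by (rule tendsto_inverse)
  then show ?thesis unfolding has_field_derivative_iff by simp
qed


locale IFun =
  fixes I :: "real set" and \<phi> :: "real \<Rightarrow> real" and \<Phi> :: "real \<Rightarrow> real"
  assumes I1: "\<And>y. y \<in> I \<Longrightarrow> \<exists>b\<in>I. y < b"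
    and I2: "\<And>b. b \<in> I \<Longrightarrow> {0..b} \<subseteq> I"
    and I3: "I \<subseteq> {0..}"
    and cont: "continuous_on I \<phi>"
    and pos: "\<And>t. t \<in> I \<Longrightarrow> 0 < \<phi> t"
    and \<Phi>_def: "\<And>y. \<Phi> y = integral {0..y} \<phi>"
begin

lemma deriv: assumes y: "y \<in> I"
  shows "(\<Phi> has_real_derivative \<phi> y) (at y within {0..})"
proof -
  obtain b where b: "b \<in> I" "y < b" using I1 y by blast
  have c: "continuous_on {0..b} \<phi>" using cont I2[OF b(1)] continuous_on_subset by blast
  have "0 \<le> y" using y I3 by auto
  then have "(\<Phi> has_real_derivative \<phi> y) (at y within {0..b})"
    using integral_has_real_derivative[OF c, of y] b using \<Phi>_def[abs_def] by (simp add: \<Phi>_def[abs_def])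
  then show ?thesis using at_within_Ici_local[OF b(2), of 0] by simp
qed

lemma deriv_at: assumes y: "y \<in> I" "0 < y"
  shows "(\<Phi> has_real_derivative \<phi> y) (at y)"
  using deriv[OF y(1)] at_within_Ici_pos[OF y(2)] by simp

lemma contI: "continuous_on I \<Phi>"
  unfolding continuous_on_eq_continuous_within
proof
  fix y assume "y \<in> I"
  from DERIV_continuous[OF deriv[OF this]] show "continuous (at y within I) \<Phi>"
    using continuous_within_subset I3 by blast
qed

lemma zero[simp]: "\<Phi> 0 = 0" by (simp add: \<Phi>_def)

lemma strict: assumes "y \<in> I" "z \<in> I" "y < z" shows "\<Phi> y < \<Phi> z"
proof (rule DERIV_pos_imp_increasing_open[OF assms(3)])
  fix t assume t: "y < t" "t < z"
  have "0 \<le> y" using assms I3 by auto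
  then have "t \<in> I" "0 < t" using I2[OF assms(2)] t by auto
  then show "\<exists>D. (\<Phi> has_real_derivative D) (at t) \<and> 0 < D"
    using deriv_at pos by blast
next
  have "{y..z} \<subseteq> I" using I2[OF assms(2)] assms I3 by force
  then show "continuous_on {y..z} \<Phi>" using contI continuous_on_subset by blast
qed

lemma mono: assumes "y \<in> I" "z \<in> I" "y \<le> z" shows "\<Phi> y \<le> \<Phi> z"
  using strict[OF assms(1,2)] assms(3) by (cases "y = z") auto

lemma zeroI: assumes "b \<in> I" shows "0 \<in> I"
proof -
  have "0 \<le> b" using I3 assms by auto
  then show ?thesis using I2[OF assms] by auto
qed

lemma image: assumes b: "b \<in> I" shows "\<Phi> ` {0..b} = {0..\<Phi> b}"
proof
  have "0 \<in> I" using zeroI[OF b] .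
  show "\<Phi> ` {0..b} \<subseteq> {0..\<Phi> b}"
  proof
    fix w assume "w \<in> \<Phi> ` {0..b}"
    then obtain t where t: "t \<in> {0..b}" "w = \<Phi> t" by blast
    have "t \<in> I" using t I2[OF b] by auto
    then show "w \<in> {0..\<Phi> b}" using mono[OF `0 \<in> I` `t \<in> I`] mono[OF `t \<in> I` b] t by auto
  qed
  show "{0..\<Phi> b} \<subseteq> \<Phi> ` {0..b}"
  proof
    fix w assume w: "w \<in> {0..\<Phi> b}"
    have "0 \<le> b" using b I3 by auto
    moreover have "continuous_on {0..b} \<Phi>" using contI I2[OF b] continuous_on_subset by blast
    ultimately obtain t where "0 \<le> t" "t \<le> b" "\<Phi> t = w"
      using IVT'[of \<Phi> 0 w b] w by auto
    then show "w \<in> \<Phi> ` {0..b}" by force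
  qed
qed

lemma inv_deriv_at:
  fixes g :: "real \<Rightarrow> real"
  assumes ginv: "\<And>z. z \<in> I \<Longrightarrow> g (\<Phi> z) = z" and y: "y \<in> I"
  shows "(g has_real_derivative inverse (\<phi> y)) (at (\<Phi> y) within {0..})"
proof -
  obtain b where b: "b \<in> I" "y < b" using I1 y by blast
  have sub: "{0..b} \<subseteq> I" using I2[OF b(1)] .
  have img: "\<Phi> ` {0..b} = {0..\<Phi> b}" using image[OF b(1)] .
  have "continuous_on (\<Phi> ` {0..b}) g"
    by (rule continuous_on_inv) (use contI sub continuous_on_subset ginv in auto)
  then have gc: "continuous_on {0..\<Phi> b} g" using img by simp
  have y0: "0 \<le> y" using y I3 by auto
  have xS: "\<Phi> y \<in> {0..\<Phi> b}" using img y0 b(2) by auto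
  have "(g has_real_derivative inverse (\<phi> y)) (at (\<Phi> y) within {0..\<Phi> b})"
  proof (rule inv_deriv[where T="{0..}"])
    show "(\<Phi> has_real_derivative \<phi> y) (at (g (\<Phi> y)) within {0..})"
      using deriv[OF y] ginv[OF y] by simp
    show "\<phi> y \<noteq> 0" using pos[OF y] by simp
    show "continuous (at (\<Phi> y) within {0..\<Phi> b}) g"
      using gc xS continuous_on_eq_continuous_within by blast
    fix z assume "z \<in> {0..\<Phi> b}"
    then obtain t where t: "t \<in> {0..b}" "z = \<Phi> t" using img by blast
    then have "t \<in> I" using sub by auto
    then show "g z \<in> {0..}" "\<Phi> (g z) = z" using t ginv by auto
  qed (rule xS)
  moreover have "\<Phi> y < \<Phi> b" using strict[OF y b(1,2)] .
  ultimately show ?thesis using at_within_Ici_local[of "\<Phi> y" "\<Phi> b" 0] by simp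
qed

end


lemma nn_int_Icc:
  fixes \<phi> :: "real \<Rightarrow> real"
  assumes cont: "continuous_on {0..y} \<phi>" and nn: "\<And>t. 0 \<le> \<phi> t" and meas: "\<phi> \<in> borel_measurable borel"
  shows "(\<integral>\<^sup>+ t. indicator {0..y} t * ennreal (\<phi> t) \<partial>lborel) = ennreal (integral {0..y} \<phi>)"
proof -
  have "(\<phi> has_integral integral {0..y} \<phi>) {0..y}"
    using integrable_continuous_interval[OF cont] by (simp add: has_integral_integral)
  then have "((\<lambda>t. if t \<in> {0..y} then \<phi> t else 0) has_integral integral {0..y} \<phi>) UNIV"
    using has_integral_restrict_UNIV by blast
  moreover have "(\<lambda>t. if t \<in> {0..y} then \<phi> t else 0) = (\<lambda>t. indicator {0..y} t * \<phi> t)"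
    by (auto simp: indicator_def)
  ultimately have hi: "((\<lambda>t. indicator {0..y} t * \<phi> t) has_integral integral {0..y} \<phi>) UNIV" by simp
  have "(\<integral>\<^sup>+ t. ennreal (indicator {0..y} t * \<phi> t) \<partial>lborel) = ennreal (integral {0..y} \<phi>)"
    by (rule nn_integral_has_integral_lborel[OF _ _ hi]) (use meas nn in auto)
  moreover have "(\<integral>\<^sup>+ t. ennreal (indicator {0..y} t * \<phi> t) \<partial>lborel)
      = (\<integral>\<^sup>+ t. indicator {0..y} t * ennreal (\<phi> t) \<partial>lborel)"
    by (rule nn_integral_cong) (auto simp: indicator_def)
  ultimately show ?thesis by simp
qed

lemma nn_SUP:
  fixes \<phi> :: "real \<Rightarrow> real"
  assumes cont: "continuous_on {0..<1} \<phi>" and nn: "\<And>t. 0 \<le> \<phi> t" and meas: "\<phi> \<in> borel_measurable borel"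
  shows "(\<integral>\<^sup>+ t. indicator {0..<1} t * ennreal (\<phi> t) \<partial>lborel) = (SUP y\<in>{0..<1}. ennreal (integral {0..y} \<phi>))"
proof (rule antisym)
  have eq: "(\<integral>\<^sup>+ t. indicator {0..y} t * ennreal (\<phi> t) \<partial>lborel) = ennreal (integral {0..y} \<phi>)"
    if "y \<in> {0..<1}" for y
    by (rule nn_int_Icc) (use that cont nn meas continuous_on_subset in \<open>auto intro: continuous_on_subset[OF cont]\<close>)
  show "(SUP y\<in>{0..<1}. ennreal (integral {0..y} \<phi>)) \<le> (\<integral>\<^sup>+ t. indicator {0..<1} t * ennreal (\<phi> t) \<partial>lborel)"
  proof (rule SUP_least)
    fix y :: real assume y: "y \<in> {0..<1}"
    have "(\<integral>\<^sup>+ t. indicator {0..y} t * ennreal (\<phi> t) \<partial>lborel) \<le> (\<integral>\<^sup>+ t. indicator {0..<1} t * ennreal (\<phi> t) \<partial>lborel)"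
      by (rule nn_integral_mono) (use y in \<open>auto simp: indicator_def\<close>)
    then show "ennreal (integral {0..y} \<phi>) \<le> (\<integral>\<^sup>+ t. indicator {0..<1} t * ennreal (\<phi> t) \<partial>lborel)"
      using eq[OF y] by simp
  qed
  define Y where "Y n = 1 - 1 / (real n + 2)" for n :: nat
  have Y: "Y n \<in> {0..<1}" for n unfolding Y_def by (auto simp: field_simps)
  have Ymono: "Y m \<le> Y n" if "m \<le> n" for m n
    unfolding Y_def using that by (auto simp: field_simps)
  define f where "f n t = indicator {0..Y n} t * ennreal (\<phi> t)" for n t
  have inc: "incseq f"
  proof (rule incseq_SucI, rule le_funI)
    fix n t show "f n t \<le> f (Suc n) t"
      unfolding f_def using Ymono[of n "Suc n"] by (auto simp: indicator_def)
  qed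
  have fm: "f n \<in> borel_measurable lborel" for n
    unfolding f_def using meas by measurable
  have "(\<integral>\<^sup>+ t. indicator {0..<1} t * ennreal (\<phi> t) \<partial>lborel) \<le> (\<integral>\<^sup>+ t. (SUP n. f n t) \<partial>lborel)"
  proof (rule nn_integral_mono)
    fix t :: real
    show "indicator {0..<1} t * ennreal (\<phi> t) \<le> (SUP n. f n t)"
    proof (cases "t \<in> {0..<1}")
      case True
      obtain n :: nat where n: "1 / (1 - t) < real n" using reals_Archimedean2 by blast
      have "t \<le> Y n"
      proof -
        have "0 < 1 - t" using True by auto
        then have "1 < real n * (1 - t)" using n by (simp add: field_simps)
        then have "1 < (real n + 2) * (1 - t)" using True by (simp add: algebra_simps)
        then have "1 / (real n + 2) < 1 - t" by (simp add: field_simps)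
        then show ?thesis unfolding Y_def by simp
      qed
      then have "indicator {0..<1} t * ennreal (\<phi> t) = f n t"
        using True by (simp add: f_def indicator_def)
      then show ?thesis by (metis SUP_upper UNIV_I)
    next
      case False then show ?thesis by simp
    qed
  qed
  also have "\<dots> = (SUP n. integral\<^sup>N lborel (f n))"
    by (rule nn_integral_monotone_convergence_SUP[OF inc fm])
  also have "\<dots> \<le> (SUP y\<in>{0..<1}. ennreal (integral {0..y} \<phi>))"
  proof (rule SUP_least)
    fix n
    have "integral\<^sup>N lborel (f n) = ennreal (integral {0..Y n} \<phi>)"
      unfolding f_def using eq[OF Y] by simp
    then show "integral\<^sup>N lborel (f n) \<le> (SUP y\<in>{0..<1}. ennreal (integral {0..y} \<phi>))"
      using Y by (metis SUP_upper)
  qed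
  finally show "(\<integral>\<^sup>+ t. indicator {0..<1} t * ennreal (\<phi> t) \<partial>lborel) \<le> (SUP y\<in>{0..<1}. ennreal (integral {0..y} \<phi>))" .
qed


lemma powr_lt1: "0 < r \<Longrightarrow> 0 \<le> t \<Longrightarrow> t < 1 \<Longrightarrow> t powr r < (1::real)"
  using powr_less_mono2[of r t 1] by simp

lemma cont_powr0: "0 < r \<Longrightarrow> S \<subseteq> {0..} \<Longrightarrow> continuous_on S (\<lambda>t::real. t powr r)"
  by (rule continuous_on_powr') (auto intro: continuous_intros)

lemma F_IFun: assumes "0 < p" "0 < r" shows "IFun {0..<1} (\<lambda>t. (1 - t powr r) powr (-1/p)) (F_pq p r)"
proof
  fix y :: real assume "y \<in> {0..<1}" then show "\<exists>b\<in>{0..<1}. y < b"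
    by (intro bexI[of _ "(y+1)/2"]) auto
next
  fix b :: real assume "b \<in> {0..<1}" then show "{0..b} \<subseteq> {0..<1}" by auto
next
  show "{0..<1} \<subseteq> {0::real..}" by auto
next
  show "continuous_on {0..<1} (\<lambda>t. (1 - t powr r) powr (-1/p))"
  proof (rule continuous_on_powr)
    show "continuous_on {0..<1} (\<lambda>t. 1 - t powr r)"
      using cont_powr0[OF assms(2), of "{0..<1}"] by (intro continuous_on_diff continuous_on_const) force
  qed (use powr_lt1[OF assms(2)] in \<open>force intro: continuous_on_const\<close>)+
next
  fix t :: real assume "t \<in> {0..<1}" then show "0 < (1 - t powr r) powr (-1/p)"
    using powr_lt1[OF assms(2), of t] by auto
qed (simp add: F_pq_def)

lemma G_IFun: assumes "0 < p" "0 < r" shows "IFun {0..} (\<lambda>t. (1 + t powr r) powr (-1/p)) (G_pq p r)"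
proof
  fix y :: real assume "y \<in> {0..}" then show "\<exists>b\<in>{0..}. y < b"
    by (intro bexI[of _ "y+1"]) auto
next
  fix b :: real assume "b \<in> {0..}" then show "{0..b} \<subseteq> {0..}" by auto
next
  show "{0..} \<subseteq> {0::real..}" by auto
next
  show "continuous_on {0..} (\<lambda>t. (1 + t powr r) powr (-1/p))"
  proof (rule continuous_on_powr)
    show "continuous_on {0..} (\<lambda>t. 1 + t powr r)"
      using cont_powr0[OF assms(2), of "{0..}"] by (intro continuous_on_add continuous_on_const) force
  qed (auto intro: continuous_on_const simp: add_nonneg_eq_0_iff)
next
  fix t :: real assume "t \<in> {0..}" then show "0 < (1 + t powr r) powr (-1/p)"
    by (simp add: add_nonneg_eq_0_iff)
qed (simp add: G_pq_def)


lemma sin_eq: assumes "0 < p" "0 < r" "0 \<le> s" "s < 1"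
  shows "sin_pq p r (F_pq p r s) = s"
proof -
  interpret IFun "{0..<1}" "\<lambda>t. (1 - t powr r) powr (-1/p)" "F_pq p r" by (rule F_IFun[OF assms(1,2)])
  show ?thesis unfolding sin_pq_def
  proof (rule the_equality)
    fix y assume y: "0 \<le> y \<and> y < 1 \<and> F_pq p r y = F_pq p r s"
    show "y = s"
    proof (rule ccontr)
      assume "y \<noteq> s"
      then have "y < s \<or> s < y" by auto
      then show False using strict[of y s] strict[of s y] y assms by auto
    qed
  qed (use assms in auto)
qed

lemma sinh_eq: assumes "0 < p" "0 < r" "0 \<le> s"
  shows "sinh_pq p r (G_pq p r s) = s"
proof -
  interpret IFun "{0..}" "\<lambda>t. (1 + t powr r) powr (-1/p)" "G_pq p r" by (rule G_IFun[OF assms(1,2)])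
  show ?thesis unfolding sinh_pq_def
  proof (rule the_equality)
    fix y assume y: "0 \<le> y \<and> G_pq p r y = G_pq p r s"
    show "y = s"
    proof (rule ccontr)
      assume "y \<noteq> s"
      then have "y < s \<or> s < y" by auto
      then show False using strict[of y s] strict[of s y] y assms by auto
    qed
  qed (use assms in auto)
qed

lemma cos_eq: assumes "0 < p" "0 < r" "0 \<le> s" "s < 1"
  shows "cos_pq p r (F_pq p r s) = (1 - s powr r) powr (1/p)"
proof -
  interpret IFun "{0..<1}" "\<lambda>t. (1 - t powr r) powr (-1/p)" "F_pq p r" by (rule F_IFun[OF assms(1,2)])
  have d: "(sin_pq p r has_real_derivative inverse ((1 - s powr r) powr (-1/p))) (at (F_pq p r s) within {0..})"
    by (rule inv_deriv_at) (use assms sin_eq in auto)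
  have e: "inverse ((1 - s powr r) powr (-1/p)) = (1 - s powr r) powr (1/p)"
    by (simp add: powr_minus[symmetric])
  have F0: "0 \<le> F_pq p r s" using mono[of 0 s] assms by auto
  show ?thesis unfolding cos_pq_def
    by (rule the_equality) (use d e deriv_Ici_unique[OF F0] in auto)
qed

lemma cosh_eq: assumes "0 < p" "0 < r" "0 \<le> s"
  shows "cosh_pq p r (G_pq p r s) = (1 + s powr r) powr (1/p)"
proof -
  interpret IFun "{0..}" "\<lambda>t. (1 + t powr r) powr (-1/p)" "G_pq p r" by (rule G_IFun[OF assms(1,2)])
  have d: "(sinh_pq p r has_real_derivative inverse ((1 + s powr r) powr (-1/p))) (at (G_pq p r s) within {0..})"
    by (rule inv_deriv_at) (use assms sinh_eq in auto)
  have e: "inverse ((1 + s powr r) powr (-1/p)) = (1 + s powr r) powr (1/p)"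
    by (simp add: powr_minus[symmetric])
  have F0: "0 \<le> G_pq p r s" using mono[of 0 s] assms by auto
  show ?thesis unfolding cosh_pq_def
    by (rule the_equality) (use d e deriv_Ici_unique[OF F0] in auto)
qed

lemma pi_eq: assumes "0 < p" "0 < r"
  shows "pi_pq p r / 2 = (SUP y\<in>{0..<1}. ennreal (F_pq p r y))"
proof -
  interpret IFun "{0..<1}" "\<lambda>t. (1 - t powr r) powr (-1/p)" "F_pq p r" by (rule F_IFun[OF assms(1,2)])
  have "(\<integral>\<^sup>+ t. indicator {0..<1} t * ennreal ((1 - t powr r) powr (-1/p)) \<partial>lborel)
     = (SUP y\<in>{0..<1}. ennreal (integral {0..y} (\<lambda>t. (1 - t powr r) powr (-1/p))))"
    by (rule nn_SUP) (use cont in auto)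
  then have "pi_pq p r = 2 * (SUP y\<in>{0..<1}. ennreal (F_pq p r y))"
    unfolding pi_pq_def F_pq_def by simp
  moreover have "((SUP y\<in>{0..<1}. ennreal (F_pq p r y)) * 2) / 2 = (SUP y\<in>{0..<1}. ennreal (F_pq p r y))"
    by (rule ennreal_mult_divide_eq) auto
  ultimately show ?thesis by (simp add: mult.commute)
qed




lemma zero_deriv_const:
  fixes H :: "real \<Rightarrow> real"
  assumes "0 \<le> s" "continuous_on {0..s} H" "H 0 = 0"
    "\<And>t. 0 < t \<Longrightarrow> t \<le> s \<Longrightarrow> (H has_real_derivative 0) (at t)"
  shows "H s = 0"
proof (rule has_derivative_zero_unique_strong_interval[of "{0}" 0 s H 0 s])
  fix x assume x: "x \<in> {0..s} - {0}"
  then have "(H has_real_derivative 0) (at x within {0..s})"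
    using assms(4)[of x] by (auto intro: has_field_derivative_at_within)
  moreover have "((*) (0::real)) = (\<lambda>h. 0)" by auto
  ultimately show "(H has_derivative (\<lambda>h. 0)) (at x within {0..s})"
    unfolding has_field_derivative_def by metis
next
  show "continuous_on {0..s} H" by (rule assms(2))
next
  show "H 0 = 0" by (rule assms(3))
next
  show "s \<in> {0..s}" using assms(1) by simp
qed simp

lemma p_inv: "0 < q \<Longrightarrow> -1 / (2*q/(2+q)) = -(1/q + 1/2::real)"
  by (simp add: field_simps)

lemma p_inv': "0 < q \<Longrightarrow> 1 / (2*q/(2+q)) = (1/q + 1/2::real)"
  by (simp add: field_simps)

lemma c_pow: "0 < q \<Longrightarrow> (2 powr (2/q)) powr (q/2) = (2::real)"
  by (simp add: powr_powr)

context
  fixes q :: real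
  assumes q: "0 < q"
begin

definition "cc = 2 powr (2/q)"
definition "U t = cc * t / (1 + t powr (q/2)) powr (2/q)"

lemma cc_pos: "0 < cc" by (simp add: cc_def)

lemma cc_eq: "cc = 2 powr (2/q)" by (simp add: cc_def)
lemma U_eq: "U t = cc * t / (1 + t powr (q/2)) powr (2/q)" by (simp add: U_def)


lemma U_alt: "U t = cc * t * (1 + t powr (q/2)) powr (-2/q)"
proof -
  have "(1 + t powr (q/2)) powr (-2/q) = inverse ((1 + t powr (q/2)) powr (2/q))"
    using powr_minus[of "1 + t powr (q/2)" "2/q"] by (simp only: minus_divide_left)
  then show ?thesis unfolding U_def by (simp only: divide_inverse)
qed

lemma U_nonneg: "0 \<le> t \<Longrightarrow> 0 \<le> U t"
  by (simp add: U_def cc_def)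

lemma U_pow: assumes "0 \<le> t"
  shows "U t powr (q/2) = 2 * t powr (q/2) / (1 + t powr (q/2))"
proof -
  have a: "0 < 1 + t powr (q/2)" by (simp add: add_pos_nonneg)
  have m: "-2/q*(q/2) = -1" using q by (simp add: field_simps)
  have "U t powr (q/2) = cc powr (q/2) * t powr (q/2) * ((1 + t powr (q/2)) powr (-2/q)) powr (q/2)"
    unfolding U_alt powr_mult ..
  also have "\<dots> = 2 * t powr (q/2) * (1 + t powr (q/2)) powr (-1)"
    using q by (simp only: powr_powr m cc_def) simp
  also have "\<dots> = 2 * t powr (q/2) / (1 + t powr (q/2))"
    using powr_neg_one[OF a] by simp
  finally show ?thesis .
qed

lemma U_lt1: assumes "0 \<le> t" "t < 1" shows "U t < 1"
proof (rule ccontr)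
  assume "\<not> U t < 1"
  then have "1 \<le> U t powr (q/2)" using q by (intro ge_one_powr_ge_zero) auto
  then have "1 \<le> 2 * t powr (q/2) / (1 + t powr (q/2))" using U_pow[OF assms(1)] by simp
  moreover have "0 < 1 + t powr (q/2)" by (simp add: add_pos_nonneg)
  ultimately have "1 + t powr (q/2) \<le> 2 * t powr (q/2)" by (simp add: le_divide_eq)
  moreover have "t powr (q/2) < 1" using powr_lt1[of "q/2" t] q assms by auto
  ultimately show False by simp
qed

lemma U_ge: assumes "0 \<le> t" "t \<le> 1" shows "t \<le> U t"
proof -
  have a1: "t powr (q/2) \<le> 1" using powr_mono2[of "q/2" t 1] assms q by simp
  have "(1 + t powr (q/2)) powr (2/q) \<le> cc"
    unfolding cc_def using a1 q by (intro powr_mono2) auto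
  moreover have "0 < (1 + t powr (q/2)) powr (2/q)" by (simp add: add_nonneg_eq_0_iff)
  ultimately show ?thesis unfolding U_def using assms
    by (simp add: le_divide_eq mult.commute mult_left_mono)
qed

lemma U_cont: "continuous_on {0..} U"
proof -
  have A: "continuous_on {0..} (\<lambda>t::real. t powr (q/2))" using cont_powr0[of "q/2" "{0..}"] q by simp
  have B: "continuous_on {0..} (\<lambda>t::real. 1 + t powr (q/2))"
    by (rule continuous_on_add[OF continuous_on_const A])
  have C: "continuous_on {0..} (\<lambda>t::real. (1 + t powr (q/2)) powr (2/q))"
    by (rule continuous_on_powr[OF B continuous_on_const]) (auto simp: add_nonneg_eq_0_iff)
  show ?thesis unfolding U_def[abs_def]
    by (rule continuous_on_divide[OF continuous_on_mult[OF continuous_on_const continuous_on_id] C])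
       (auto simp: add_nonneg_eq_0_iff)
qed

lemma U_deriv: assumes "0 < t"
  shows "(U has_real_derivative cc * (1 + t powr (q/2)) powr (-2/q - 1)) (at t)"
proof -
  have a: "0 < 1 + t powr (q/2)" by (simp add: add_pos_nonneg)
  have d: "((\<lambda>t. cc * t * (1 + t powr (q/2)) powr (-2/q)) has_real_derivative
     cc * (1 + t powr (q/2)) powr (-2/q) + cc * t * ((-2/q) * (1 + t powr (q/2)) powr (-2/q - 1) * ((q/2) * t powr (q/2 - 1)))) (at t)"
    using assms a q by (auto intro!: derivative_eq_intros)
  have e1: "(1 + t powr (q/2)) powr (-2/q) = (1 + t powr (q/2)) powr (-2/q - 1) * (1 + t powr (q/2))"
  proof -
    have "(1 + t powr (q/2)) powr (-2/q - 1) * (1 + t powr (q/2)) = (1 + t powr (q/2)) powr (-2/q - 1) * (1 + t powr (q/2)) powr 1"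
      using a by simp
    also have "\<dots> = (1 + t powr (q/2)) powr (-2/q - 1 + 1)" by (rule powr_add[symmetric])
    finally show ?thesis by simp
  qed
  have e2: "t * t powr (q/2 - 1) = t powr (q/2)"
  proof -
    have "t * t powr (q/2 - 1) = t powr 1 * t powr (q/2 - 1)" using assms by simp
    also have "\<dots> = t powr (1 + (q/2 - 1))" by (rule powr_add[symmetric])
    finally show ?thesis by simp
  qed
  have "cc * (1 + t powr (q/2)) powr (-2/q) + cc * t * ((-2/q) * (1 + t powr (q/2)) powr (-2/q - 1) * ((q/2) * t powr (q/2 - 1)))
      = cc * (1 + t powr (q/2)) powr (-2/q - 1) * ((1 + t powr (q/2)) - (2/q) * (q/2) * (t * t powr (q/2 - 1)))"
    unfolding e1 by (simp add: algebra_simps)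
  also have "\<dots> = cc * (1 + t powr (q/2)) powr (-2/q - 1)"
    unfolding e2 using q by simp
  finally show ?thesis using d unfolding U_alt[abs_def] by simp
qed

lemma U_pos: "0 < t \<Longrightarrow> 0 < U t"
  by (simp add: U_def cc_def add_nonneg_eq_0_iff)

lemma U_zero: "U 0 = 0" by (simp add: U_def)

lemma powr_sq: "0 \<le> t \<Longrightarrow> t powr q = t powr (q/2) * t powr (q/2)"
  by (simp add: powr_add[symmetric])

lemma KA: assumes "0 \<le> a" "a < 1"
  shows "(1 - 2*a/(1+a)) powr (-(1/q+1/2)) * (cc * (1+a) powr (-2/q - 1)) = cc * (1 - a*a) powr (-(1/q+1/2))"
proof -
  define e where "e = -(1/q+1/2)"
  have h1: "1 - 2*a/(1+a) = (1-a)/(1+a)" using assms by (simp add: field_simps)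
  have h2: "1 - a*a = (1-a)*(1+a)" by (simp add: algebra_simps)
  have h3: "(1+a) powr (-2/q - 1) = (1+a) powr e * (1+a) powr e"
  proof -
    have "(1+a) powr e * (1+a) powr e = (1+a) powr (e + e)" by (rule powr_add[symmetric])
    moreover have "e + e = -2/q - 1" unfolding e_def by (simp add: field_simps)
    ultimately show ?thesis by simp
  qed
  have nz: "(1+a) powr e \<noteq> 0" using assms by simp
  have "(1 - 2*a/(1+a)) powr e * (cc * (1+a) powr (-2/q - 1))
      = ((1-a) powr e / (1+a) powr e) * (cc * ((1+a) powr e * (1+a) powr e))"
    unfolding h1 h3 powr_divide ..
  also have "\<dots> = cc * ((1-a) powr e * (1+a) powr e)"
    using nz by (simp add: field_simps)
  also have "\<dots> = cc * (1 - a*a) powr e" unfolding h2 powr_mult ..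
  finally show ?thesis unfolding e_def .
qed

lemma subst_U: assumes s: "0 \<le> s" "s < 1"
  shows "F_pq (2*q/(2+q)) (q/2) (U s) = cc * F_pq (2*q/(2+q)) q s"
proof -
  define p where "p = 2*q/(2+q)"
  have p: "0 < p" using q by (simp add: p_def)
  have pe: "-1/p = -(1/q+1/2)" unfolding p_def using p_inv[OF q] .
  interpret A: IFun "{0..<1}" "\<lambda>t. (1 - t powr (q/2)) powr (-1/p)" "F_pq p (q/2)"
    by (rule F_IFun) (use p q in auto)
  interpret B: IFun "{0..<1}" "\<lambda>t. (1 - t powr q) powr (-1/p)" "F_pq p q"
    by (rule F_IFun) (use p q in auto)
  define H where "H t = F_pq p (q/2) (U t) - cc * F_pq p q t" for t
  have Uin: "U t \<in> {0..<1}" if "t \<in> {0..s}" for t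
    using U_nonneg U_lt1 that s by auto
  have "H s = 0"
  proof (rule zero_deriv_const[OF s(1)])
    have c1: "continuous_on {0..s} (\<lambda>t. F_pq p (q/2) (U t))"
      by (rule continuous_on_compose2[OF A.contI continuous_on_subset[OF U_cont]]) (use Uin in auto)
    have c2: "continuous_on {0..s} (F_pq p q)"
      by (rule continuous_on_subset[OF B.contI]) (use s in auto)
    show "continuous_on {0..s} H" unfolding H_def[abs_def]
      by (intro continuous_on_diff c1 continuous_on_mult continuous_on_const c2)
    show "H 0 = 0" unfolding H_def U_zero using A.zero B.zero by simp
  next
    fix t assume t: "0 < t" "t \<le> s"
    have tin: "t \<in> {0..<1}" using t s by auto
    have d1: "((\<lambda>t. F_pq p (q/2) (U t)) has_real_derivative
        (1 - U t powr (q/2)) powr (-1/p) * (cc * (1 + t powr (q/2)) powr (-2/q - 1))) (at t)"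
      by (rule DERIV_chain2[OF A.deriv_at U_deriv]) (use Uin[of t] t U_pos in auto)
    have d2: "(F_pq p q has_real_derivative (1 - t powr q) powr (-1/p)) (at t)"
      by (rule B.deriv_at) (use tin t in auto)
    have dH: "(H has_real_derivative
        (1 - U t powr (q/2)) powr (-1/p) * (cc * (1 + t powr (q/2)) powr (-2/q - 1)) - cc * (1 - t powr q) powr (-1/p)) (at t)"
      unfolding H_def[abs_def] by (intro DERIV_diff d1 DERIV_cmult d2)
    have eq: "(1 - U t powr (q/2)) powr (-1/p) * (cc * (1 + t powr (q/2)) powr (-2/q - 1)) = cc * (1 - t powr q) powr (-1/p)"
    proof -
      have a0: "0 \<le> t powr (q/2)" by simp
      have a1: "t powr (q/2) < 1" using powr_lt1[of "q/2" t] q tin by auto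
      show ?thesis unfolding pe U_pow[OF less_imp_le[OF t(1)]] powr_sq[OF less_imp_le[OF t(1)]]
        by (rule KA[OF a0 a1])
    qed
    show "(H has_real_derivative 0) (at t)" using dH unfolding eq by simp
  qed
  then show ?thesis unfolding H_def p_def by simp
qed

definition "T s = s * (1 - s powr q) powr (-1/q)"

lemma T_zero: "T 0 = 0" by (simp add: T_def)

lemma T_nonneg: "0 \<le> s \<Longrightarrow> 0 \<le> T s" by (simp add: T_def)

lemma T_pow: assumes "0 \<le> s" "s < 1"
  shows "T s powr q = s powr q / (1 - s powr q)"
proof -
  have b: "0 < 1 - s powr q" using powr_lt1[OF q assms] by simp
  have m: "-1/q*q = -1" using q by simp
  have "T s powr q = s powr q * ((1 - s powr q) powr (-1/q)) powr q"
    unfolding T_def powr_mult ..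
  also have "\<dots> = s powr q * (1 - s powr q) powr (-1)"
    by (simp only: powr_powr m)
  also have "\<dots> = s powr q / (1 - s powr q)"
    using powr_neg_one[OF b] by simp
  finally show ?thesis .
qed

lemma T_cont: "continuous_on {0..<1} T"
proof -
  have A: "continuous_on {0..<1} (\<lambda>t::real. t powr q)" using cont_powr0[of q "{0..<1}"] q by force
  have B: "continuous_on {0..<1} (\<lambda>t::real. 1 - t powr q)"
    by (rule continuous_on_diff[OF continuous_on_const A])
  have C: "continuous_on {0..<1} (\<lambda>t::real. (1 - t powr q) powr (-1/q))"
    by (rule continuous_on_powr[OF B continuous_on_const]) (use powr_lt1[OF q] in force)
  show ?thesis unfolding T_def[abs_def]
    by (rule continuous_on_mult[OF continuous_on_id C])
qed

lemma T_deriv: assumes "0 < s" "s < 1"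
  shows "(T has_real_derivative (1 - s powr q) powr (-1/q - 1)) (at s)"
proof -
  have b: "0 < 1 - s powr q" using powr_lt1[OF q] assms by simp
  have d: "(T has_real_derivative
     (1 - s powr q) powr (-1/q) + s * ((-1/q) * (1 - s powr q) powr (-1/q - 1) * (- (q * s powr (q - 1))))) (at s)"
    unfolding T_def[abs_def] using assms b q by (auto intro!: derivative_eq_intros)
  have e1: "(1 - s powr q) powr (-1/q) = (1 - s powr q) powr (-1/q - 1) * (1 - s powr q)"
  proof -
    have "(1 - s powr q) powr (-1/q - 1) * (1 - s powr q) = (1 - s powr q) powr (-1/q - 1) * (1 - s powr q) powr 1"
      using b by simp
    also have "\<dots> = (1 - s powr q) powr (-1/q - 1 + 1)" by (rule powr_add[symmetric])
    finally show ?thesis by simp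
  qed
  have e2: "s * s powr (q - 1) = s powr q"
  proof -
    have "s * s powr (q - 1) = s powr 1 * s powr (q - 1)" using assms by simp
    also have "\<dots> = s powr (1 + (q - 1))" by (rule powr_add[symmetric])
    finally show ?thesis by simp
  qed
  have "(1 - s powr q) powr (-1/q) + s * ((-1/q) * (1 - s powr q) powr (-1/q - 1) * (- (q * s powr (q - 1))))
      = (1 - s powr q) powr (-1/q - 1) * ((1 - s powr q) + (1/q) * q * (s * s powr (q - 1)))"
    unfolding e1 by (simp add: algebra_simps)
  also have "\<dots> = (1 - s powr q) powr (-1/q - 1)"
    unfolding e2 using q by simp
  finally show ?thesis using d by simp
qed

lemma subst_T: assumes s: "0 \<le> s" "s < 1"
  shows "G_pq 2 q (T s) = F_pq (2*q/(2+q)) q s"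
proof -
  define p where "p = 2*q/(2+q)"
  have p: "0 < p" using q by (simp add: p_def)
  have pe: "-1/p = -(1/q+1/2)" unfolding p_def using p_inv[OF q] .
  interpret A: IFun "{0..}" "\<lambda>t. (1 + t powr q) powr (-1/2)" "G_pq 2 q"
    by (rule G_IFun) (use q in auto)
  interpret B: IFun "{0..<1}" "\<lambda>t. (1 - t powr q) powr (-1/p)" "F_pq p q"
    by (rule F_IFun) (use p q in auto)
  define H where "H t = G_pq 2 q (T t) - F_pq p q t" for t
  have "H s = 0"
  proof (rule zero_deriv_const[OF s(1)])
    have c1: "continuous_on {0..s} (\<lambda>t. G_pq 2 q (T t))"
    proof (rule continuous_on_compose2[OF A.contI continuous_on_subset[OF T_cont]])
      show "{0..s} \<subseteq> {0..<1}" using s(2) by (simp add: subset_iff)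
      show "T ` {0..s} \<subseteq> {0..}" using T_nonneg by (simp add: image_subset_iff)
    qed
    have c2: "continuous_on {0..s} (F_pq p q)"
      by (rule continuous_on_subset[OF B.contI]) (use s in auto)
    show "continuous_on {0..s} H" unfolding H_def[abs_def]
      by (intro continuous_on_diff c1 c2)
    show "H 0 = 0" unfolding H_def T_zero using A.zero B.zero by simp
  next
    fix t assume t: "0 < t" "t \<le> s"
    have tin: "t \<in> {0..<1}" using t s by auto
    have Tp: "0 < T t" unfolding T_def using t tin powr_lt1[OF q, of t] by (intro mult_pos_pos) auto
    have d1: "((\<lambda>t. G_pq 2 q (T t)) has_real_derivative
        (1 + T t powr q) powr (-1/2) * (1 - t powr q) powr (-1/q - 1)) (at t)"
      by (rule DERIV_chain2[OF A.deriv_at T_deriv]) (use Tp t tin in auto)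
    have d2: "(F_pq p q has_real_derivative (1 - t powr q) powr (-1/p)) (at t)"
      by (rule B.deriv_at) (use tin t in auto)
    have dH: "(H has_real_derivative
        (1 + T t powr q) powr (-1/2) * (1 - t powr q) powr (-1/q - 1) - (1 - t powr q) powr (-1/p)) (at t)"
      unfolding H_def[abs_def] by (intro DERIV_diff d1 d2)
    have eq: "(1 + T t powr q) powr (-1/2) * (1 - t powr q) powr (-1/q - 1) = (1 - t powr q) powr (-1/p)"
    proof -
      have b: "0 < 1 - t powr q" using powr_lt1[OF q] tin by simp
      have "1 + T t powr q = (1 - t powr q) powr (-1)"
        unfolding T_pow[OF less_imp_le[OF t(1)] tin[simplified, THEN conjunct2]] powr_neg_one[OF b]
        using b by (simp add: field_simps)
      then have "(1 + T t powr q) powr (-1/2) = ((1 - t powr q) powr (-1)) powr (-1/2)"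
        by (simp only:)
      also have "\<dots> = (1 - t powr q) powr (-1 * (-1/2))" by (rule powr_powr)
      finally have "(1 + T t powr q) powr (-1/2) * (1 - t powr q) powr (-1/q - 1)
          = (1 - t powr q) powr (-1 * (-1/2)) * (1 - t powr q) powr (-1/q - 1)" by simp
      also have "\<dots> = (1 - t powr q) powr (-1 * (-1/2) + (-1/q - 1))" by (rule powr_add[symmetric])
      also have "-1 * (-1/2) + (-1/q - 1) = 1/2 + (-1/q - 1)" by simp
      also have "1/2 + (-1/q - 1) = -1/p" unfolding pe by simp
      finally show ?thesis .
    qed
    show "(H has_real_derivative 0) (at t)" using dH unfolding eq by simp
  qed
  then show ?thesis unfolding H_def p_def by simp
qed

definition "W s = (1 + s powr q) powr (1/2)"
definition "V s = cc * s * (W s + s powr (q/2)) powr (2/q)"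

lemma W_eq: "W t = (1 + t powr q) powr (1/2)" by (simp add: W_def)
lemma V_eq: "V t = cc * t * (W t + t powr (q/2)) powr (2/q)" by (simp add: V_def)

lemma W_pos: "0 < W s" by (simp add: W_def add_nonneg_eq_0_iff)

lemma W_sq: assumes "0 \<le> s" shows "W s * W s = 1 + s powr (q/2) * s powr (q/2)"
proof -
  have "W s * W s = (1 + s powr q) powr (1/2 + 1/2)" unfolding W_def by (rule powr_add[symmetric])
  also have "\<dots> = 1 + s powr q" by (simp add: add_nonneg_eq_0_iff)
  finally show ?thesis using powr_sq[OF assms] by simp
qed

lemma V_zero: "V 0 = 0" by (simp add: V_def)

lemma V_nonneg: "0 \<le> s \<Longrightarrow> 0 \<le> V s" by (simp add: V_def cc_def)

lemma V_pos: "0 < s \<Longrightarrow> 0 < V s"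
proof -
  assume "0 < s"
  moreover have "0 < W s + s powr (q/2)" using W_pos[of s] by (simp add: add_pos_nonneg)
  ultimately show ?thesis unfolding V_def using cc_pos by simp
qed

lemma V_pow: assumes "0 \<le> s"
  shows "V s powr (q/2) = 2 * s powr (q/2) * (W s + s powr (q/2))"
proof -
  have wa: "0 < W s + s powr (q/2)" using W_pos[of s] by (simp add: add_pos_nonneg)
  have m1: "2/q*(q/2) = 1" using q by simp
  have "V s powr (q/2) = cc powr (q/2) * s powr (q/2) * ((W s + s powr (q/2)) powr (2/q)) powr (q/2)"
    unfolding V_def powr_mult ..
  also have "\<dots> = 2 powr 1 * s powr (q/2) * (W s + s powr (q/2)) powr 1"
    by (simp only: powr_powr m1 cc_def)
  also have "\<dots> = 2 * s powr (q/2) * (W s + s powr (q/2))" using wa by simp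
  finally show ?thesis .
qed

lemma V_cont: "continuous_on {0..} V"
proof -
  have A: "continuous_on {0..} (\<lambda>t::real. t powr (q/2))" using cont_powr0[of "q/2" "{0..}"] q by simp
  have A2: "continuous_on {0..} (\<lambda>t::real. t powr q)" using cont_powr0[of q "{0..}"] q by simp
  have B: "continuous_on {0..} W" unfolding W_def[abs_def]
    by (rule continuous_on_powr[OF continuous_on_add[OF continuous_on_const A2] continuous_on_const])
       (auto simp: add_nonneg_eq_0_iff)
  have C: "continuous_on {0..} (\<lambda>t::real. (W t + t powr (q/2)) powr (2/q))"
  proof (rule continuous_on_powr[OF continuous_on_add[OF B A] continuous_on_const])
    show "\<forall>x\<in>{0..}. W x + x powr (q / 2) \<noteq> 0" using W_pos
      by (metis add_pos_nonneg powr_ge_zero less_irrefl)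
  qed
  show ?thesis unfolding V_def[abs_def]
    by (rule continuous_on_mult[OF continuous_on_mult[OF continuous_on_const continuous_on_id] C])
qed

lemma V_deriv: assumes "0 < s"
  shows "(V has_real_derivative cc * (W s + s powr (q/2)) powr (2/q) * (W s + s powr (q/2)) / W s) (at s)"
proof -
  have wa: "0 < W s + s powr (q/2)" using W_pos[of s] by (simp add: add_pos_nonneg)
  have b: "0 < 1 + s powr q" by (simp add: add_pos_nonneg)
  have d: "(V has_real_derivative
     cc * (W s + s powr (q/2)) powr (2/q) + cc * s * ((2/q) * (W s + s powr (q/2)) powr (2/q - 1) *
       ((1/2) * (1 + s powr q) powr (1/2 - 1) * (q * s powr (q - 1)) + (q/2) * s powr (q/2 - 1)))) (at s)"
    unfolding V_def[abs_def] W_def[abs_def] using assms wa b q unfolding W_def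
    by (auto intro!: derivative_eq_intros)
  define a where "a = s powr (q/2)"
  define w where "w = W s"
  define P where "P = (w + a) powr (2/q)"
  have s0: "0 \<le> s" using assms by simp
  have r1: "s powr (q - 1) = a * a / s"
    using powr_diff[of s q 1] assms powr_sq[OF s0] unfolding a_def by simp
  have r2: "(1 + s powr q) powr (1/2 - 1) = w / (w * w)"
  proof -
    have "(1 + s powr q) powr (1/2 - 1) = w / (1 + s powr q) powr 1"
      using powr_diff[of "1 + s powr q" "1/2" 1] unfolding w_def W_def by simp
    also have "(1 + s powr q) powr 1 = w * w" using W_sq[OF s0] b powr_sq[OF s0] unfolding w_def a_def by simp
    finally show ?thesis .
  qed
  have r3: "s powr (q/2 - 1) = a / s"
    using powr_diff[of s "q/2" 1] assms unfolding a_def by simp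
  have r4: "(W s + s powr (q/2)) powr (2/q - 1) = P / (w + a)"
    using powr_diff[of "w + a" "2/q" 1] wa unfolding P_def w_def a_def by simp
  have alg: "cc * P + cc * s * ((2/q) * (P / (w + a)) * ((1/2) * (w / (w * w)) * (q * (a * a / s)) + (q/2) * (a / s)))
      = cc * P * (w + a) / w"
  proof -
    have "w \<noteq> 0" using W_pos unfolding w_def by (metis less_irrefl)
    moreover have "w + a \<noteq> 0" using wa unfolding w_def a_def by simp
    moreover have "s \<noteq> 0" using assms by simp
    moreover have "q \<noteq> 0" using q by simp
    ultimately have nz: "w \<noteq> 0" "w + a \<noteq> 0" "s \<noteq> 0" "q \<noteq> 0" by auto
    have i1: "(1/2) * (w / (w * w)) * (q * (a * a / s)) + (q/2) * (a / s) = q * a * (w + a) / (2 * s * w)"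
      using nz by (simp add: field_simps)
    have i2: "(2/q) * (P / (w + a)) * (q * a * (w + a) / (2 * s * w)) = P * a / (s * w)"
    proof -
      have cancel: "x / c * (y * c / z) = x * (y / z)" if "c \<noteq> 0" for x y z c :: real
        using that by (simp add: field_simps)
      have "(2/q) * (P / (w + a)) * (q * a * (w + a) / (2 * s * w)) = (2/q) * (P / (w + a) * (q * a * (w + a) / (2 * s * w)))"
        by simp
      also have "\<dots> = (2/q) * (P * (q * a / (2 * s * w)))" by (subst cancel[OF nz(2)]) (rule refl)
      also have "\<dots> = (2/q) * P * (q * a / (2 * s * w))" by (simp only: mult.assoc)
      also have "\<dots> = P * a / (s * w)" using nz by (simp add: field_simps)
      finally show ?thesis .
    qed
    have i3: "cc * P + cc * s * (P * a / (s * w)) = cc * P * (w + a) / w"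
      using nz by (simp add: field_simps)
    show ?thesis unfolding i1 i2 i3 ..
  qed
  have "cc * (W s + s powr (q/2)) powr (2/q) + cc * s * ((2/q) * (W s + s powr (q/2)) powr (2/q - 1) *
       ((1/2) * (1 + s powr q) powr (1/2 - 1) * (q * s powr (q - 1)) + (q/2) * s powr (q/2 - 1)))
     = cc * (W s + s powr (q/2)) powr (2/q) * (W s + s powr (q/2)) / W s"
    unfolding r1 r2 r3 r4 using alg unfolding P_def w_def a_def by simp
  then show ?thesis using d by simp
qed

lemma subst_V: assumes s: "0 \<le> s"
  shows "G_pq (2*q/(2+q)) (q/2) (V s) = cc * G_pq 2 q s"
proof -
  define p where "p = 2*q/(2+q)"
  have p: "0 < p" using q by (simp add: p_def)
  have pe: "-1/p = -(1/q+1/2)" unfolding p_def using p_inv[OF q] .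
  interpret A: IFun "{0..}" "\<lambda>t. (1 + t powr (q/2)) powr (-1/p)" "G_pq p (q/2)"
    by (rule G_IFun) (use p q in auto)
  interpret B: IFun "{0..}" "\<lambda>t. (1 + t powr q) powr (-1/2)" "G_pq 2 q"
    by (rule G_IFun) (use q in auto)
  define H where "H t = G_pq p (q/2) (V t) - cc * G_pq 2 q t" for t
  have "H s = 0"
  proof (rule zero_deriv_const[OF s(1)])
    have c1: "continuous_on {0..s} (\<lambda>t. G_pq p (q/2) (V t))"
    proof (rule continuous_on_compose2[OF A.contI continuous_on_subset[OF V_cont]])
      show "{0..s} \<subseteq> {0..}" by (simp add: subset_iff)
      show "V ` {0..s} \<subseteq> {0..}" using V_nonneg by (simp add: image_subset_iff)
    qed
    have c2: "continuous_on {0..s} (G_pq 2 q)"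
      by (rule continuous_on_subset[OF B.contI]) (simp add: subset_iff)
    show "continuous_on {0..s} H" unfolding H_def[abs_def]
      by (intro continuous_on_diff c1 continuous_on_mult continuous_on_const c2)
    show "H 0 = 0" unfolding H_def V_zero using A.zero B.zero by simp
  next
    fix t assume t: "0 < t" "t \<le> s"
    have t0: "0 \<le> t" using t by simp
    have d1: "((\<lambda>t. G_pq p (q/2) (V t)) has_real_derivative
        (1 + V t powr (q/2)) powr (-1/p) * (cc * (W t + t powr (q/2)) powr (2/q) * (W t + t powr (q/2)) / W t)) (at t)"
      by (rule DERIV_chain2[OF A.deriv_at V_deriv]) (use t V_pos[of t] in auto)
    have d2: "(G_pq 2 q has_real_derivative (1 + t powr q) powr (-1/2)) (at t)"
      by (rule B.deriv_at) (use t in auto)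
    have dH: "(H has_real_derivative
        (1 + V t powr (q/2)) powr (-1/p) * (cc * (W t + t powr (q/2)) powr (2/q) * (W t + t powr (q/2)) / W t)
         - cc * (1 + t powr q) powr (-1/2)) (at t)"
      unfolding H_def[abs_def] by (intro DERIV_diff d1 DERIV_cmult d2)
    have eq: "(1 + V t powr (q/2)) powr (-1/p) * (cc * (W t + t powr (q/2)) powr (2/q) * (W t + t powr (q/2)) / W t)
         = cc * (1 + t powr q) powr (-1/2)"
    proof -
      define a where "a = t powr (q/2)"
      define w where "w = W t"
      define e where "e = w + a"
      have e0: "0 < e" unfolding e_def w_def a_def using W_pos[of t] by (simp add: add_pos_nonneg)
      have w0: "0 < w" unfolding w_def by (rule W_pos)
      have h1: "1 + V t powr (q/2) = e * e"
        unfolding V_pow[OF t0] e_def using W_sq[OF t0] unfolding w_def[symmetric] a_def[symmetric]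
        by (simp add: algebra_simps)
      have h2: "(e * e) powr (-1/p) = e powr (-2/q - 1)"
      proof -
        have "(e * e) powr (-1/p) = e powr (-1/p) * e powr (-1/p)" by (rule powr_mult)
        also have "\<dots> = e powr (-1/p + -1/p)" by (rule powr_add[symmetric])
        also have "-1/p + -1/p = -2/q - 1" unfolding pe by (simp add: field_simps)
        finally show ?thesis .
      qed
      have h3: "e powr (-2/q - 1) * (e powr (2/q) * e) = 1"
      proof -
        have "e powr (-2/q - 1) * (e powr (2/q) * e) = e powr (-2/q - 1) * (e powr (2/q) * e powr 1)"
          using e0 by simp
        also have "\<dots> = e powr (-2/q - 1 + (2/q + 1))" by (simp only: powr_add)
        finally show ?thesis using e0 by simp
      qed
      have h4: "(1 + t powr q) powr (-1/2) = 1 / w"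
      proof -
        have "(1 + t powr q) powr (-(1/2)) = inverse ((1 + t powr q) powr (1/2))" by (rule powr_minus)
        then show ?thesis unfolding w_def W_def minus_divide_left inverse_eq_divide .
      qed
      have "(1 + V t powr (q/2)) powr (-1/p) * (cc * (W t + t powr (q/2)) powr (2/q) * (W t + t powr (q/2)) / W t)
          = e powr (-2/q - 1) * (cc * e powr (2/q) * e / w)"
        unfolding h1 h2 unfolding e_def w_def a_def ..
      also have "\<dots> = cc * (e powr (-2/q - 1) * (e powr (2/q) * e)) / w" by (simp only: times_divide_eq_right mult_ac)
      also have "\<dots> = cc / w" unfolding h3 by simp
      finally show ?thesis unfolding h4 by simp
    qed
    show "(H has_real_derivative 0) (at t)" using dH unfolding eq by simp
  qed
  then show ?thesis unfolding H_def p_def by simp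
qed

end



lemma pi_eq2: assumes "0 < p" "0 < r"
  shows "pi_pq p r = 2 * (SUP y\<in>{0..<1}. ennreal (F_pq p r y))"
proof -
  interpret IFun "{0..<1}" "\<lambda>t. (1 - t powr r) powr (-1/p)" "F_pq p r" by (rule F_IFun[OF assms(1,2)])
  have "(\<integral>\<^sup>+ t. indicator {0..<1} t * ennreal ((1 - t powr r) powr (-1/p)) \<partial>lborel)
     = (SUP y\<in>{0..<1}. ennreal (integral {0..y} (\<lambda>t. (1 - t powr r) powr (-1/p))))"
    by (rule nn_SUP) (use cont in auto)
  then show ?thesis
    unfolding pi_pq_def F_pq_def by simp
qed

theorem theorem4p1:
  fixes q :: real
  assumes "0 < q"
  shows "pi_pq (2*q/(2+q)) (q/2) / ennreal (2 powr (2/q + 1)) = pi_pq (2*q/(2+q)) q / 2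
    \<and> (\<forall>x::real. 0 \<le> x \<and> ennreal x < pi_pq (2*q/(2+q)) q / 2 \<longrightarrow>
        sin_pq (2*q/(2+q)) (q/2) (2 powr (2/q) * x)
          = 2 powr (2/q) * sin_pq (2*q/(2+q)) q x
            / (1 + sin_pq (2*q/(2+q)) q x powr (q/2)) powr (2/q)
      \<and> cos_pq (2*q/(2+q)) (q/2) (2 powr (2/q) * x)
          = ((1 - sin_pq (2*q/(2+q)) q x powr (q/2))
             / (1 + sin_pq (2*q/(2+q)) q x powr (q/2))) powr (1/q + 1/2)
      \<and> sinh_pq (2*q/(2+q)) (q/2) (2 powr (2/q) * x)
          = 2 powr (2/q) * sinh_pq 2 q x
            * (cosh_pq 2 q x + sinh_pq 2 q x powr (q/2)) powr (2/q)
      \<and> cosh_pq (2*q/(2+q)) (q/2) (2 powr (2/q) * x)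
          = (cosh_pq 2 q x + sinh_pq 2 q x powr (q/2)) powr (2/q + 1))"
proof -
  have q: "0 < q" by (rule assms)
  define p where "p = 2*q/(2+q)"
  have p: "0 < p" using q by (simp add: p_def)
  have q2: "0 < q/2" using q by simp
  define c where "c = 2 powr (2/q)"
  have cdef: "cc q = c" using cc_eq[OF q] by (simp add: c_def)
  have c0: "0 < c" unfolding c_def by simp
  interpret F1: IFun "{0..<1}" "\<lambda>t. (1 - t powr (q/2)) powr (-1/p)" "F_pq p (q/2)"
    by (rule F_IFun[OF p q2])
  interpret F2: IFun "{0..<1}" "\<lambda>t. (1 - t powr q) powr (-1/p)" "F_pq p q"
    by (rule F_IFun[OF p q])
  interpret G1: IFun "{0..}" "\<lambda>t. (1 + t powr (q/2)) powr (-1/p)" "G_pq p (q/2)"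
    by (rule G_IFun[OF p q2])
  interpret G2: IFun "{0..}" "\<lambda>t. (1 + t powr q) powr (-1/2)" "G_pq 2 q"
    by (rule G_IFun) (use q in auto)
  define S1 where "S1 = (SUP y\<in>{0..<1}. ennreal (F_pq p (q/2) y))"
  define S where "S = (SUP y\<in>{0..<1}. ennreal (F_pq p q y))"
  have subU: "F_pq p (q/2) (U q s) = c * F_pq p q s" if "0 \<le> s" "s < 1" for s
    using subst_U[OF q that] unfolding p_def cdef .
  have S1eq: "S1 = ennreal c * S"
  proof (rule antisym)
    show "S1 \<le> ennreal c * S" unfolding S1_def
    proof (rule SUP_least)
      fix y :: real assume y: "y \<in> {0..<1}"
      have Uy: "U q y \<in> {0..<1}" using U_nonneg[OF q] U_lt1[OF q] y by auto
      have "F_pq p (q/2) y \<le> F_pq p (q/2) (U q y)"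
        by (rule F1.mono) (use y Uy U_ge[OF q, of y] in auto)
      also have "\<dots> = c * F_pq p q y" using subU y by auto
      finally have "ennreal (F_pq p (q/2) y) \<le> ennreal (c * F_pq p q y)" by (rule ennreal_leI)
      also have "\<dots> = ennreal c * ennreal (F_pq p q y)"
        using c0 F2.mono[of 0 y] y by (simp add: ennreal_mult)
      also have "\<dots> \<le> ennreal c * S" unfolding S_def
        by (rule mult_left_mono) (use y in \<open>auto intro: SUP_upper\<close>)
      finally show "ennreal (F_pq p (q/2) y) \<le> ennreal c * S" .
    qed
    show "ennreal c * S \<le> S1" unfolding S_def SUP_mult_left_ennreal
    proof (rule SUP_least)
      fix y :: real assume y: "y \<in> {0..<1}"
      have Uy: "U q y \<in> {0..<1}" using U_nonneg[OF q] U_lt1[OF q] y by auto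
      have "ennreal c * ennreal (F_pq p q y) = ennreal (c * F_pq p q y)"
        using c0 F2.mono[of 0 y] y by (simp add: ennreal_mult)
      also have "\<dots> = ennreal (F_pq p (q/2) (U q y))" using subU y by auto
      also have "\<dots> \<le> S1" unfolding S1_def using Uy by (auto intro: SUP_upper)
      finally show "ennreal c * ennreal (F_pq p q y) \<le> S1" .
    qed
  qed
  have piS: "pi_pq p q / 2 = S" unfolding S_def by (rule pi_eq[OF p q])
  have part1: "pi_pq p (q/2) / ennreal (2 powr (2/q + 1)) = pi_pq p q / 2"
  proof -
    have e2: "2 powr (2/q + 1) = 2 * c" unfolding c_def by (simp add: powr_add)
    have "pi_pq p (q/2) = 2 * S1" unfolding S1_def by (rule pi_eq2[OF p q2])
    then have "pi_pq p (q/2) = S * ennreal (2 * c)"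
      using S1eq c0 by (simp add: ennreal_mult mult_ac)
    then have "pi_pq p (q/2) / ennreal (2 powr (2/q + 1)) = S * ennreal (2 * c) / ennreal (2 * c)"
      unfolding e2 by simp
    also have "\<dots> = S" by (rule ennreal_mult_divide_eq) (use c0 in auto)
    finally show ?thesis using piS by simp
  qed
  have part2: "sin_pq p (q/2) (c * x) = c * sin_pq p q x / (1 + sin_pq p q x powr (q/2)) powr (2/q)
      \<and> cos_pq p (q/2) (c * x) = ((1 - sin_pq p q x powr (q/2)) / (1 + sin_pq p q x powr (q/2))) powr (1/q + 1/2)
      \<and> sinh_pq p (q/2) (c * x) = c * sinh_pq 2 q x * (cosh_pq 2 q x + sinh_pq 2 q x powr (q/2)) powr (2/q)
      \<and> cosh_pq p (q/2) (c * x) = (cosh_pq 2 q x + sinh_pq 2 q x powr (q/2)) powr (2/q + 1)"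
    if x: "0 \<le> x" "ennreal x < pi_pq p q / 2" for x
  proof -
    from x(2) have "ennreal x < S" using piS by simp
    then obtain y where y: "y \<in> {0..<1}" "ennreal x < ennreal (F_pq p q y)"
      unfolding S_def by (auto simp: less_SUP_iff)
    have xy: "x < F_pq p q y" using y(2) x(1) by (simp add: ennreal_less_iff)
    have "x \<in> F_pq p q ` {0..y}" using F2.image[OF y(1)] xy x(1) by auto
    then obtain s where s: "0 \<le> s" "s \<le> y" "F_pq p q s = x" by auto
    have s1: "s < 1" using s y by auto
    have sin_x: "sin_pq p q x = s" using sin_eq[OF p q s(1) s1] s(3) by simp
    have Us: "U q s \<in> {0..<1}" using U_nonneg[OF q] U_lt1[OF q] s s1 by auto
    have cx: "c * x = F_pq p (q/2) (U q s)" using subU[OF s(1) s1] s(3) by simp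
    have A1: "sin_pq p (q/2) (c * x) = U q s" unfolding cx using sin_eq[OF p q2] Us by auto
    have A2: "cos_pq p (q/2) (c * x) = (1 - U q s powr (q/2)) powr (1/p)"
      unfolding cx using cos_eq[OF p q2] Us by auto
    have a1: "s powr (q/2) < 1" using powr_lt1[OF q2 s(1) s1] .
    have A2': "1 - U q s powr (q/2) = (1 - s powr (q/2)) / (1 + s powr (q/2))"
      unfolding U_pow[OF q s(1)] by (simp add: field_simps add_nonneg_eq_0_iff)
    have pp: "1/p = 1/q + 1/2" unfolding p_def by (rule p_inv'[OF q])
    have Ty: "G_pq 2 q (T q y) = F_pq p q y" using subst_T[OF q] y unfolding p_def by auto
    have Ty0: "T q y \<in> {0..}" using T_nonneg[OF q] y by auto
    have "x \<in> G_pq 2 q ` {0..T q y}" using G2.image[OF Ty0] xy x(1) Ty by auto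
    then obtain \<sigma> where sg: "0 \<le> \<sigma>" "G_pq 2 q \<sigma> = x" by auto
    have sinh_x: "sinh_pq 2 q x = \<sigma>" using sinh_eq[of 2 q \<sigma>] q sg by simp
    have cosh_x: "cosh_pq 2 q x = W q \<sigma>" using cosh_eq[of 2 q \<sigma>] q sg by (simp add: W_eq[OF q])
    have cx2: "c * x = G_pq p (q/2) (V q \<sigma>)" using subst_V[OF q sg(1)] sg(2) unfolding p_def cdef by simp
    have V0: "0 \<le> V q \<sigma>" using V_nonneg[OF q sg(1)] .
    have B1: "sinh_pq p (q/2) (c * x) = V q \<sigma>" unfolding cx2 using sinh_eq[OF p q2 V0] .
    have B2: "cosh_pq p (q/2) (c * x) = (1 + V q \<sigma> powr (q/2)) powr (1/p)"
      unfolding cx2 using cosh_eq[OF p q2 V0] .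
    define e where "e = W q \<sigma> + \<sigma> powr (q/2)"
    have e0: "0 < e" unfolding e_def using W_pos[OF q, of \<sigma>] by (simp add: add_pos_nonneg)
    have h1: "1 + V q \<sigma> powr (q/2) = e * e"
      unfolding V_pow[OF q sg(1)] e_def using W_sq[OF q sg(1)] by (simp add: algebra_simps)
    have h2: "(e * e) powr (1/p) = e powr (2/q + 1)"
    proof -
      have "(e * e) powr (1/p) = e powr (1/p) * e powr (1/p)" by (rule powr_mult)
      also have "\<dots> = e powr (1/p + 1/p)" by (rule powr_add[symmetric])
      also have "1/p + 1/p = 2/q + 1" unfolding pp by simp
      finally show ?thesis .
    qed
    show ?thesis
    proof (intro conjI)
      show "sin_pq p (q/2) (c * x) = c * sin_pq p q x / (1 + sin_pq p q x powr (q/2)) powr (2/q)"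
        unfolding A1 sin_x U_eq[OF q] cdef ..
      show "cos_pq p (q/2) (c * x) = ((1 - sin_pq p q x powr (q/2)) / (1 + sin_pq p q x powr (q/2))) powr (1/q + 1/2)"
        unfolding A2 A2' sin_x pp ..
      show "sinh_pq p (q/2) (c * x) = c * sinh_pq 2 q x * (cosh_pq 2 q x + sinh_pq 2 q x powr (q/2)) powr (2/q)"
        unfolding B1 sinh_x cosh_x V_eq[OF q] cdef ..
      show "cosh_pq p (q/2) (c * x) = (cosh_pq 2 q x + sinh_pq 2 q x powr (q/2)) powr (2/q + 1)"
        unfolding B2 h1 h2 sinh_x cosh_x unfolding e_def ..
    qed
  qed
  show ?thesis using part1 part2 unfolding p_def c_def by blast
qed

end
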